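(* Let $q$ be a prime power, let $d+1$ be a divisor of $q-1$, and let $f:\mathbb{F}_q\to\mathbb{F}_q$ be $(d+1)$-divisible and differentially $d$-uniform. Then $f$ is almost-$(d+1)$-to-1.
   Context: For a divisor $k$ of $q-1$, $f$ is $k$-divisible if $f(x)=f'(x^k)$ for some map $f':\mathbb{F}_q\to\mathbb{F}_q$. $f$ is differentially $d$-uniform if $d=\max_{a\neq 0,\,b\in\mathbb{F}_q}|\{x\in\mathbb{F}_q: f(x+a)-f(x)=b\}|$. $f$ is almost-$k$-to-1 if there is a unique element of $\mathrm{Im}(f)$ with exactly one preimage and every other element of $\mathrm{Im}(f)$ has exactly $k$ preimages. *)

theory Defs
  imports Main
begin

text \<open>Functions on a finite field, modelled as a type of class finite and field;
  q is CARD('a) (automatically a prime power).\<close>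

definition k_divisible :: "nat \<Rightarrow> ('a::field \<Rightarrow> 'a) \<Rightarrow> bool" where
  "k_divisible k f \<longleftrightarrow> (\<exists>f'::'a \<Rightarrow> 'a. \<forall>x. f x = f' (x ^ k))"

definition diff_count :: "('a::{finite,field} \<Rightarrow> 'a) \<Rightarrow> 'a \<Rightarrow> 'a \<Rightarrow> nat" where
  "diff_count f a b = card {x. f (x + a) - f x = b}"

definition diff_uniformity :: "('a::{finite,field} \<Rightarrow> 'a) \<Rightarrow> nat" where
  "diff_uniformity f = Max {diff_count f a b | a b. a \<noteq> 0}"

definition differentially_uniform :: "nat \<Rightarrow> ('a::{finite,field} \<Rightarrow> 'a) \<Rightarrow> bool" where
  "differentially_uniform d f \<longleftrightarrow> d = diff_uniformity f"

definition almost_k_to_1 :: "nat \<Rightarrow> ('a::finite \<Rightarrow> 'b) \<Rightarrow> bool" where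
  "almost_k_to_1 k f \<longleftrightarrow>
     (\<exists>y0 \<in> range f. card (f -` {y0}) = 1 \<and>
        (\<forall>y \<in> range f. y \<noteq> y0 \<longrightarrow> card (f -` {y}) = k))"

end

theory Submission
  imports Defs "HOL-Computational_Algebra.Polynomial"
begin

lemma roots_bound:
  fixes c :: "'a::field"
  assumes "n \<ge> 1"
  shows "card {x. x ^ n = c} \<le> n"
proof -
  let ?p = "monom (1::'a) n + [:-c:]"
  have deg: "degree ?p = n"
    using assms by (subst degree_add_eq_left) (simp_all add: degree_monom_eq)
  hence "?p \<noteq> 0" using assms by auto
  hence "card {x. poly ?p x = 0} \<le> degree ?p" by (rule card_poly_roots_bound)
  moreover have "{x. poly ?p x = 0} = {x. x ^ n = c}" by (simp add: poly_monom)
  ultimately show ?thesis using deg by simp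
qed

lemma fermat:
  fixes x :: "'a::{finite,field}"
  assumes "x \<noteq> 0"
  shows "x ^ (card (UNIV::'a set) - 1) = 1"
proof -
  let ?N = "UNIV - {0::'a}"
  have bij: "bij_betw (\<lambda>y. x * y) ?N ?N"
    by (rule bij_betw_byWitness[where f' = "\<lambda>y. y / x"]) (use assms in auto)
  have "prod (\<lambda>y. x * y) ?N = prod id ?N"
    using prod.reindex_bij_betw[OF bij, of id] by simp
  moreover have "prod (\<lambda>y. x * y) ?N = x ^ card ?N * prod id ?N"
    by (simp add: prod.distrib)
  moreover have "prod id ?N \<noteq> 0" by simp
  moreover have "card ?N = card (UNIV::'a set) - 1" by (simp add: card_Diff_subset)
  ultimately show ?thesis by simp
qed

lemma card_mu:
  fixes k :: nat
  assumes "k dvd (card (UNIV::'a::{finite,field} set) - 1)" and "k \<ge> 1"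
  shows "card {w::'a. w ^ k = 1} = k"
proof (rule antisym)
  show "card {w::'a. w ^ k = 1} \<le> k" using roots_bound assms(2) by blast
next
  let ?M = "{w::'a. w ^ k = 1}"
  let ?N = "UNIV - {0::'a}"
  obtain m where m: "card (UNIV::'a set) - 1 = k * m" using assms(1) by blast
  have q2: "card (UNIV::'a set) \<ge> 2"
  proof -
    have "{0::'a, 1} \<subseteq> UNIV" by simp
    hence "card {0::'a,1} \<le> card (UNIV::'a set)" by (rule card_mono[OF finite_UNIV])
    thus ?thesis by simp
  qed
  hence m1: "m \<ge> 1" using m by (cases m) auto
  have cN: "card ?N = k * m" using m by (simp add: card_Diff_subset)
  let ?phi = "\<lambda>x::'a. x ^ k"
  have img: "?phi ` ?N \<subseteq> {y. y ^ m = 1}"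
  proof
    fix y assume "y \<in> ?phi ` ?N"
    then obtain x where x: "x \<noteq> 0" "y = x ^ k" by auto
    have "y ^ m = x ^ (k * m)" using x by (simp add: power_mult)
    also have "\<dots> = 1" using fermat[OF x(1)] m by simp
    finally show "y \<in> {y. y ^ m = 1}" by simp
  qed
  have cimg: "card (?phi ` ?N) \<le> m"
  proof -
    have "card (?phi ` ?N) \<le> card {y::'a. y ^ m = 1}" by (rule card_mono[OF _ img]) simp
    moreover have "card {y::'a. y ^ m = 1} \<le> m" by (rule roots_bound[OF m1])
    ultimately show ?thesis by linarith
  qed
  have fib: "card {x \<in> ?N. ?phi x = y} = card ?M" if yin: "y \<in> ?phi ` ?N" for y
  proof -
    obtain x0 where "x0 \<in> ?N" "y = x0 ^ k" using yin by (rule imageE)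
    hence x0: "x0 \<noteq> 0" "y = x0 ^ k" by auto
    have "{x \<in> ?N. ?phi x = y} = (\<lambda>w. w * x0) ` ?M"
    proof (rule set_eqI, rule iffI)
      fix x assume "x \<in> {x \<in> ?N. ?phi x = y}"
      hence "x \<noteq> 0" "x ^ k = x0 ^ k" using x0 by auto
      hence "(x / x0) ^ k = 1" "x = (x / x0) * x0" using x0 by (auto simp: power_divide)
      thus "x \<in> (\<lambda>w. w * x0) ` ?M" by blast
    next
      fix x assume "x \<in> (\<lambda>w. w * x0) ` ?M"
      then obtain w where "w ^ k = 1" "x = w * x0" by auto
      moreover hence "w \<noteq> 0" using assms(2) by (cases k) auto
      ultimately show "x \<in> {x \<in> ?N. ?phi x = y}" using x0 by (auto simp: power_mult_distrib)
    qed
    moreover have "inj_on (\<lambda>w. w * x0) ?M" using x0 by (auto simp: inj_on_def)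
    ultimately show ?thesis by (simp add: card_image)
  qed
  have "card ?N = (\<Sum>y\<in>?phi ` ?N. card {x \<in> ?N. ?phi x = y})"
    using sum.image_gen[of ?N "\<lambda>_. (1::nat)" ?phi] by simp
  also have "\<dots> = card (?phi ` ?N) * card ?M" using fib by simp
  also have "\<dots> \<le> m * card ?M" using cimg by simp
  finally have "k * m \<le> m * card ?M" using cN by simp
  thus "k \<le> card ?M" using m1 by (simp add: mult.commute)
qed

theorem theorem3p2:
  fixes f :: "'a::{finite,field} \<Rightarrow> 'a" and d :: nat
  assumes "(d + 1) dvd (card (UNIV :: 'a set) - 1)"
    and "k_divisible (d + 1) f"
    and "differentially_uniform d f"
  shows "almost_k_to_1 (d + 1) f"
proof -
  let ?k = "d + 1"
  let ?M = "{w::'a. w ^ ?k = 1}"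
  have cM: "card ?M = ?k" using card_mu[OF assms(1)] by simp
  obtain f' where f': "\<And>x. f x = f' (x ^ ?k)" using assms(2) unfolding k_divisible_def by blast
  have inv: "f (w * x) = f x" if "w \<in> ?M" for w x
    using that by (simp add: f' power_mult_distrib del: power_Suc)
  have fin: "finite {diff_count f a b | a b. a \<noteq> 0}"
    by (rule finite_subset[of _ "range (\<lambda>(a,b). diff_count f a b)"]) auto
  have bound: "diff_count f a b \<le> d" if "a \<noteq> 0" for a b
  proof -
    have "diff_count f a b \<le> Max {diff_count f a b | a b. a \<noteq> 0}"
      using that by (intro Max_ge[OF fin]) blast
    thus ?thesis using assms(3) unfolding differentially_uniform_def diff_uniformity_def by simp
  qed
  have claim: "\<exists>w\<in>?M. v = w * u" if fuv: "f u = f v" for u v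
  proof (rule ccontr)
    assume nw: "\<not> (\<exists>w\<in>?M. v = w * u)"
    define a where "a = v - u"
    have a0: "a \<noteq> 0" using nw unfolding a_def by force
    let ?S = "{x. f (x + a) - f x = 0}"
    let ?g = "\<lambda>w. a / (w - 1)"
    have sub: "insert u (?g ` (?M - {1})) \<subseteq> ?S"
    proof
      fix x assume "x \<in> insert u (?g ` (?M - {1}))"
      then show "x \<in> ?S"
      proof
        assume "x = u" thus ?thesis using fuv unfolding a_def by simp
      next
        assume "x \<in> ?g ` (?M - {1})"
        then obtain w where w: "w \<in> ?M" "w \<noteq> 1" "x = a / (w - 1)" by auto
        have "x + a = w * x" using w(2,3) by (simp add: field_simps)
        thus ?thesis using inv[OF w(1)] by simp
      qed
    qed
    have nu: "u \<notin> ?g ` (?M - {1})"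
    proof
      assume "u \<in> ?g ` (?M - {1})"
      then obtain w where w: "w \<in> ?M" "w \<noteq> 1" "u = a / (w - 1)" by auto
      hence "v = w * u" unfolding a_def by (simp add: field_simps)
      thus False using nw w(1) by blast
    qed
    have injg: "inj_on ?g (?M - {1})"
      using a0 by (auto simp: inj_on_def field_simps)
    have "card (?M - {1}) = d" using cM by simp
    hence "card (insert u (?g ` (?M - {1}))) = d + 1"
      using nu injg by (simp add: card_image)
    hence "d + 1 \<le> card ?S" using card_mono[OF _ sub] by simp
    moreover have "card ?S \<le> d" using bound[OF a0, of 0] unfolding diff_count_def by simp
    ultimately show False by simp
  qed
  have fibre: "f -` {f u} = (\<lambda>w. w * u) ` ?M" for u
  proof (rule set_eqI, rule iffI)
    fix v assume "v \<in> f -` {f u}"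
    thus "v \<in> (\<lambda>w. w * u) ` ?M" using claim[of u v] by auto
  next
    fix v assume "v \<in> (\<lambda>w. w * u) ` ?M"
    thus "v \<in> f -` {f u}" using inv by auto
  qed
  have M1: "1 \<in> ?M" by simp
  show ?thesis unfolding almost_k_to_1_def
  proof (intro bexI[of _ "f 0"] conjI ballI impI)
    have ne: "?M \<noteq> {}" using M1 by blast
    have "(\<lambda>w. w * (0::'a)) ` ?M = {0}" using ne by (simp only: mult_zero_right image_constant_conv) simp
    thus "card (f -` {f 0}) = 1" using fibre[of 0] by simp
  next
    fix y assume "y \<in> range f" "y \<noteq> f 0"
    then obtain u where u: "y = f u" "u \<noteq> 0" by auto
    have "inj_on (\<lambda>w. w * u) ?M" using u by (auto simp: inj_on_def)
    thus "card (f -` {y}) = d + 1" using fibre[of u] u cM by (simp add: card_image)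
  qed simp
qed

end
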